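(* Let $n\ge1$, $d>0$, $\eta>0$, $A(d)=\{a\in\mathbb{R}^n:|a|\le d\}$ and $t:A(d)\times[-\eta,\eta]\to\mathbb{R}$ twice continuously differentiable. Assume $\partial_{bb}t(a,b)>0$ for all $a\in A(d),b\in[-\eta,\eta]$; $\partial_bt(a,\eta)>0$ and $\partial_bt(a,-\eta)<0$ for all $a\in A(d)$; $$\lambda_{\max}\left(\nabla_a^2t(a,b)-\frac{1}{\partial_{bb}t(a,b)}\partial_b\nabla_at(a,b)\big(\partial_b\nabla_at(a,b)\big)^T\right)<0$$ for all $a\in A(d),b\in[-\eta,\eta]$; and that the directional derivative $\partial_a\{\inf_{b\in[-\eta,\eta]}t(a,b)\}$ in the direction of the vector $a$ exists and is negative for all $a$ with $|a|=d$. Then $t$ has a unique critical point in $A(d)\times[-\eta,\eta]$, and $\sup_{a\in A(d)}\inf_{b\in[-\eta,\eta]}t(a,b)$ is uniquely achieved at this critical point.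
   Context: $\lambda_{\max}$ denotes the largest eigenvalue of a symmetric matrix. *)

theory Defs
  imports "HOL-Analysis.Analysis"
begin

definition lambda_max :: "real^'n^'n \<Rightarrow> real" where
  "lambda_max M = Max {l. \<exists>v. v \<noteq> 0 \<and> M *v v = l *\<^sub>R v}"

definition outer :: "real^'n \<Rightarrow> real^'n^'n" where
  "outer v = (\<chi> i j. v $ i * v $ j)"

end

theory Submission
  imports Defs
begin

lemma mvt_seg:
  fixes f :: "'a::real_normed_vector \<Rightarrow> real"
  assumes S: "convex S" "p \<in> S" "q \<in> S"
    and d: "\<And>x. x \<in> S \<Longrightarrow> (f has_derivative f' x) (at x within S)"
  shows "\<exists>s\<in>{0<..<1}. f q - f p = f' (p + s *\<^sub>R (q - p)) (q - p)"
proof -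
  have inS: "p + s *\<^sub>R (q - p) \<in> S" if "s \<in> {0..1}" for s
  proof -
    have "p + s *\<^sub>R (q - p) = (1 - s) *\<^sub>R p + s *\<^sub>R q" by (simp add: algebra_simps)
    thus ?thesis using convexD[OF S(1) S(2) S(3), of "1-s" s] that by auto
  qed
  have dd: "((\<lambda>s. f (p + s *\<^sub>R (q - p))) has_derivative (\<lambda>y. f' (p + s *\<^sub>R (q - p)) (y *\<^sub>R (q - p)))) (at s within {0..1})"
    if "s \<in> {0..1}" for s
    apply (rule has_derivative_in_compose2[OF d, of "\<lambda>s. p + s *\<^sub>R (q - p)" "{0..1}"])
      apply assumption
    using inS that apply auto[2]
    by (auto intro!: derivative_eq_intros)
  obtain s where s: "s \<in> {0<..<1}" and eq: "f (p + 1 *\<^sub>R (q - p)) - f (p + 0 *\<^sub>R (q - p)) = f' (p + s *\<^sub>R (q - p)) ((1 - 0) *\<^sub>R (q - p))"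
    using mvt_simple[of 0 1 "\<lambda>s. f (p + s *\<^sub>R (q - p))" "\<lambda>s y. f' (p + s *\<^sub>R (q - p)) (y *\<^sub>R (q - p))"] dd by auto
  thus ?thesis using s by auto
qed

lemma line_deriv:
  fixes F :: "'a::real_normed_vector \<Rightarrow> real"
  assumes "(F has_derivative F') (at (p + \<tau> *\<^sub>R v))"
  shows "((\<lambda>\<tau>. F (p + \<tau> *\<^sub>R v)) has_real_derivative F' v) (at \<tau>)"
proof -
  have lin: "linear F'" using assms has_derivative_linear by blast
  have l1: "((\<lambda>\<tau>. p + \<tau> *\<^sub>R v) has_derivative (\<lambda>y. y *\<^sub>R v)) (at \<tau>)"
    by (auto intro!: derivative_eq_intros)
  have "((\<lambda>\<tau>. F (p + \<tau> *\<^sub>R v)) has_derivative (\<lambda>y. F' (y *\<^sub>R v))) (at \<tau>)"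
    using diff_chain_at[OF l1 assms] by (simp add: o_def)
  moreover have "(\<lambda>y. F' (y *\<^sub>R v)) = (\<lambda>y. F' v * y)"
    using linear_scale[OF lin] by (auto simp: mult.commute)
  ultimately show ?thesis by (simp add: has_field_derivative_def)
qed

lemma norm_two_bound:
  fixes v w :: "'a::real_normed_vector"
  assumes "a \<in> {0..s}" "b \<in> {0..s}"
  shows "norm (a *\<^sub>R v + b *\<^sub>R w) \<le> s * (norm v + norm w)"
proof -
  have "norm (a *\<^sub>R v + b *\<^sub>R w) \<le> a * norm v + b * norm w"
    using assms norm_triangle_ineq[of "a *\<^sub>R v" "b *\<^sub>R w"] by auto
  also have "\<dots> \<le> s * norm v + s * norm w"
    using assms by (intro add_mono mult_right_mono) auto
  finally show ?thesis by (simp add: distrib_left)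
qed

lemma tendsto_by_dist_bound:
  assumes "eventually (\<lambda>s. dist (g s) x \<le> b s) F" "(b \<longlongrightarrow> 0) F"
  shows "(g \<longlongrightarrow> x) F"
proof -
  have "((\<lambda>s. dist (g s) x) \<longlongrightarrow> 0) F"
    by (rule tendsto_sandwich[OF _ assms(1) tendsto_const assms(2)]) auto
  thus ?thesis using tendsto_dist_iff by blast
qed

lemma schwarz_aux:
  fixes f :: "'a::real_normed_vector \<Rightarrow> real"
  assumes d1: "\<And>y. y \<in> ball x r \<Longrightarrow> (f has_derivative f' y) (at y)"
    and d2: "\<And>y v. y \<in> ball x r \<Longrightarrow> ((\<lambda>z. f' z v) has_derivative f'' y v) (at y)"
    and s: "0 < s" "s * (norm v + norm w) < r"
  shows "\<exists>\<tau> \<sigma>. \<tau> \<in> {0..s} \<and> \<sigma> \<in> {0..s} \<and>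
     f (x + (s *\<^sub>R v + s *\<^sub>R w)) - f (x + s *\<^sub>R v) - f (x + s *\<^sub>R w) + f x
       = s * s * f'' (x + (\<tau> *\<^sub>R v + \<sigma> *\<^sub>R w)) v w"
proof -
  have inb: "x + (a *\<^sub>R v + b *\<^sub>R w) \<in> ball x r" if "a \<in> {0..s}" "b \<in> {0..s}" for a b
  proof -
    have "dist x (x + (a *\<^sub>R v + b *\<^sub>R w)) = norm (a *\<^sub>R v + b *\<^sub>R w)"
      by (metis add_diff_cancel_left' dist_commute dist_norm)
    thus ?thesis using norm_two_bound[OF that, of v w] s by simp
  qed
  define g where "g \<tau> = f ((x + s *\<^sub>R w) + \<tau> *\<^sub>R v) - f (x + \<tau> *\<^sub>R v)" for \<tau>
  have dg: "DERIV g \<tau> :> f' (x + s *\<^sub>R w + \<tau> *\<^sub>R v) v - f' (x + \<tau> *\<^sub>R v) v"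
    if "0 \<le> \<tau>" "\<tau> \<le> s" for \<tau>
    unfolding g_def
  proof (rule DERIV_diff; rule line_deriv; rule d1)
    show "x + s *\<^sub>R w + \<tau> *\<^sub>R v \<in> ball x r"
      using inb[of \<tau> s] that s by (simp add: algebra_simps)
    show "x + \<tau> *\<^sub>R v \<in> ball x r"
      using inb[of \<tau> 0] that s by simp
  qed
  obtain \<tau> where \<tau>: "0 < \<tau>" "\<tau> < s"
    and eq1: "g s - g 0 = (s - 0) * (f' (x + s *\<^sub>R w + \<tau> *\<^sub>R v) v - f' (x + \<tau> *\<^sub>R v) v)"
    using MVT2[OF s(1), of g "\<lambda>\<tau>. f' (x + s *\<^sub>R w + \<tau> *\<^sub>R v) v - f' (x + \<tau> *\<^sub>R v) v"] dg
    by auto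
  define h where "h \<sigma> = f' ((x + \<tau> *\<^sub>R v) + \<sigma> *\<^sub>R w) v" for \<sigma>
  have dh: "DERIV h \<sigma> :> f'' (x + \<tau> *\<^sub>R v + \<sigma> *\<^sub>R w) v w" if "0 \<le> \<sigma>" "\<sigma> \<le> s" for \<sigma>
    unfolding h_def
  proof (rule line_deriv; rule d2)
    show "x + \<tau> *\<^sub>R v + \<sigma> *\<^sub>R w \<in> ball x r"
      using inb[of \<tau> \<sigma>] that \<tau> by (simp add: algebra_simps)
  qed
  obtain \<sigma> where \<sigma>: "0 < \<sigma>" "\<sigma> < s"
    and eq2: "h s - h 0 = (s - 0) * f'' (x + \<tau> *\<^sub>R v + \<sigma> *\<^sub>R w) v w"
    using MVT2[OF s(1), of h "\<lambda>\<sigma>. f'' (x + \<tau> *\<^sub>R v + \<sigma> *\<^sub>R w) v w"] dh by auto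
  have "f (x + (s *\<^sub>R v + s *\<^sub>R w)) - f (x + s *\<^sub>R v) - f (x + s *\<^sub>R w) + f x = g s - g 0"
    by (simp add: g_def algebra_simps)
  also have "\<dots> = s * (h s - h 0)"
    using eq1 by (simp add: h_def algebra_simps)
  also have "\<dots> = s * s * f'' (x + (\<tau> *\<^sub>R v + \<sigma> *\<^sub>R w)) v w"
    using eq2 by (simp add: algebra_simps)
  finally show ?thesis using \<tau> \<sigma> by (intro exI[of _ \<tau>] exI[of _ \<sigma>]) auto
qed

lemma schwarz:
  fixes f :: "'a::real_normed_vector \<Rightarrow> real"
  assumes U: "open U" "x \<in> U"
    and d1: "\<And>y. y \<in> U \<Longrightarrow> (f has_derivative f' y) (at y)"
    and d2: "\<And>y v. y \<in> U \<Longrightarrow> ((\<lambda>z. f' z v) has_derivative f'' y v) (at y)"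
    and c2: "\<And>v w. isCont (\<lambda>y. f'' y v w) x"
  shows "f'' x v w = f'' x w v"
proof -
  obtain r where r: "r > 0" "ball x r \<subseteq> U" using U openE by blast
  define C where "C = norm v + norm w + 1"
  have C: "C > 0" unfolding C_def by (simp add: add_nonneg_pos)
  have ex: "\<exists>\<tau> \<sigma> \<tau>' \<sigma>'. 0 < s \<and> s * C < r \<longrightarrow> (\<tau> \<in> {0..s} \<and> \<sigma> \<in> {0..s} \<and> \<tau>' \<in> {0..s} \<and> \<sigma>' \<in> {0..s}
     \<and> f'' (x + (\<tau> *\<^sub>R v + \<sigma> *\<^sub>R w)) v w = f'' (x + (\<tau>' *\<^sub>R w + \<sigma>' *\<^sub>R v)) w v)" for s
  proof (cases "0 < s \<and> s * C < r")
    case True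
    have sC: "s * (norm v + norm w) < r" "s * (norm w + norm v) < r"
      using True C_def by (smt (verit) mult_left_mono norm_ge_zero)+
    obtain \<tau> \<sigma> where a: "\<tau> \<in> {0..s}" "\<sigma> \<in> {0..s}"
      "f (x + (s *\<^sub>R v + s *\<^sub>R w)) - f (x + s *\<^sub>R v) - f (x + s *\<^sub>R w) + f x
       = s * s * f'' (x + (\<tau> *\<^sub>R v + \<sigma> *\<^sub>R w)) v w"
      using schwarz_aux[of x r f f' f'' s v w] d1 d2 r True sC by blast
    obtain \<tau>' \<sigma>' where b: "\<tau>' \<in> {0..s}" "\<sigma>' \<in> {0..s}"
      "f (x + (s *\<^sub>R w + s *\<^sub>R v)) - f (x + s *\<^sub>R w) - f (x + s *\<^sub>R v) + f x
       = s * s * f'' (x + (\<tau>' *\<^sub>R w + \<sigma>' *\<^sub>R v)) w v"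
      using schwarz_aux[of x r f f' f'' s w v] d1 d2 r True sC by blast
    have "s * s * f'' (x + (\<tau> *\<^sub>R v + \<sigma> *\<^sub>R w)) v w = s * s * f'' (x + (\<tau>' *\<^sub>R w + \<sigma>' *\<^sub>R v)) w v"
      using a(3) b(3) by (simp add: algebra_simps)
    hence "f'' (x + (\<tau> *\<^sub>R v + \<sigma> *\<^sub>R w)) v w = f'' (x + (\<tau>' *\<^sub>R w + \<sigma>' *\<^sub>R v)) w v"
      using True by simp
    thus ?thesis using a b by blast
  qed auto
  then obtain T S T' S' where TS: "\<And>s. 0 < s \<and> s * C < r \<Longrightarrow> T s \<in> {0..s} \<and> S s \<in> {0..s} \<and> T' s \<in> {0..s} \<and> S' s \<in> {0..s}
     \<and> f'' (x + (T s *\<^sub>R v + S s *\<^sub>R w)) v w = f'' (x + (T' s *\<^sub>R w + S' s *\<^sub>R v)) w v"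
    by metis
  have ev: "eventually (\<lambda>s. 0 < s \<and> s * C < r) (at_right 0)"
  proof -
    have "eventually (\<lambda>s. s \<in> {0<..<r / C}) (at_right 0)"
      by (rule eventually_at_right_real) (use r C in auto)
    thus ?thesis by eventually_elim (use C in \<open>auto simp: field_simps\<close>)
  qed
  have lim0: "((\<lambda>s. s * C) \<longlongrightarrow> 0) (at_right 0)"
    using tendsto_mult_left_zero[OF tendsto_ident_at[of 0 "{0<..}"], of C] by (simp add: mult.commute)
  have L1: "((\<lambda>s. x + (T s *\<^sub>R v + S s *\<^sub>R w)) \<longlongrightarrow> x) (at_right 0)"
  proof (rule tendsto_by_dist_bound[OF _ lim0])
    show "\<forall>\<^sub>F s in at_right 0. dist (x + (T s *\<^sub>R v + S s *\<^sub>R w)) x \<le> s * C"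
      using ev
    proof eventually_elim
      case (elim s)
      have "norm (T s *\<^sub>R v + S s *\<^sub>R w) \<le> s * (norm v + norm w)"
        using TS[OF elim] norm_two_bound by blast
      also have "\<dots> \<le> s * C" using elim unfolding C_def by simp
      finally show ?case by (simp add: dist_norm)
    qed
  qed
  have L2: "((\<lambda>s. x + (T' s *\<^sub>R w + S' s *\<^sub>R v)) \<longlongrightarrow> x) (at_right 0)"
  proof (rule tendsto_by_dist_bound[OF _ lim0])
    show "\<forall>\<^sub>F s in at_right 0. dist (x + (T' s *\<^sub>R w + S' s *\<^sub>R v)) x \<le> s * C"
      using ev
    proof eventually_elim
      case (elim s)
      have "norm (T' s *\<^sub>R w + S' s *\<^sub>R v) \<le> s * (norm w + norm v)"
        using TS[OF elim] norm_two_bound by blast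
      also have "\<dots> \<le> s * C" using elim unfolding C_def by simp
      finally show ?case by (simp add: dist_norm)
    qed
  qed
  have M1: "((\<lambda>s. f'' (x + (T s *\<^sub>R v + S s *\<^sub>R w)) v w) \<longlongrightarrow> f'' x v w) (at_right 0)"
    by (rule isCont_tendsto_compose[OF c2 L1])
  have M2: "((\<lambda>s. f'' (x + (T' s *\<^sub>R w + S' s *\<^sub>R v)) w v) \<longlongrightarrow> f'' x w v) (at_right 0)"
    by (rule isCont_tendsto_compose[OF c2 L2])
  have M1': "((\<lambda>s. f'' (x + (T' s *\<^sub>R w + S' s *\<^sub>R v)) w v) \<longlongrightarrow> f'' x v w) (at_right 0)"
    by (rule Lim_transform_eventually[OF M1]) (use ev TS in \<open>auto elim: eventually_mono\<close>)
  show ?thesis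
    using tendsto_unique[OF _ M1' M2] by simp
qed

lemma outer_mult: "outer u *v y = (u \<bullet> y) *\<^sub>R u"
  by (simp add: outer_def vec_eq_iff matrix_vector_mult_def inner_vec_def sum_distrib_left mult_ac)

lemma deriv_left_compare:
  fixes f g :: "real \<Rightarrow> real"
  assumes f: "(f has_real_derivative D) (at 0 within {-1..0})"
    and g: "(g has_real_derivative E) (at 0 within {-1..0})"
    and le: "\<And>u. u \<in> {-1..0} \<Longrightarrow> f u - f 0 \<le> g u - g 0"
  shows "E \<le> D"
proof -
  have at: "at (0::real) within {-1..0} = at_left 0" by (rule at_within_Icc_at_left) simp
  have f': "((\<lambda>y. (f y - f 0) / (y - 0)) \<longlongrightarrow> D) (at_left 0)"
    using f by (simp add: has_field_derivative_iff at)
  have g': "((\<lambda>y. (g y - g 0) / (y - 0)) \<longlongrightarrow> E) (at_left 0)"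
    using g by (simp add: has_field_derivative_iff at)
  have ev: "eventually (\<lambda>u. u \<in> {-1<..<0}) (at_left (0::real))"
    by (rule eventually_at_left_real) simp
  show ?thesis
  proof (rule tendsto_le[OF _ f' g'])
    show "\<forall>\<^sub>F x in at_left 0. (g x - g 0) / (x - 0) \<le> (f x - f 0) / (x - 0)"
      using ev
    proof eventually_elim
      case (elim u)
      hence "f u - f 0 \<le> g u - g 0" using le by auto
      thus ?case using elim by (simp add: divide_right_mono_neg)
    qed
  qed simp
qed


lemma quad_zero:
  fixes c e :: real
  assumes "\<And>s. 0 \<le> 2 * s * c + s * s * e"
  shows "c = 0"
proof -
  define E where "E = \<bar>e\<bar> + 1"
  have E: "E > 0" unfolding E_def by simp
  have "0 \<le> 2 * (- c / E) * c + (- c / E) * (- c / E) * e" by (rule assms)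
  hence "0 \<le> (2 * (- c / E) * c + (- c / E) * (- c / E) * e) * (E * E)"
    using E by simp
  also have "\<dots> = c * c * (e - 2 * E)" using E by (simp add: field_simps)
  finally have "0 \<le> c * c * (e - 2 * E)" .
  moreover have "e - 2 * E < 0" unfolding E_def by (cases "e \<ge> 0") auto
  ultimately have "c * c \<le> 0" by (smt (verit) mult_pos_neg zero_le_square)
  thus ?thesis using mult_le_0_iff[of c c] by auto
qed

lemma rayleigh:
  fixes M :: "real^'n^'n"
  assumes sym: "\<And>x y. x \<bullet> (M *v y) = y \<bullet> (M *v x)"
  shows "x \<bullet> (M *v x) \<le> lambda_max M * (x \<bullet> x)"
proof -
  define q where "q z = z \<bullet> (M *v z)" for z
  have cq: "continuous_on (sphere 0 1) q" unfolding q_def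
    by (intro continuous_intros)
  obtain k :: 'n where True by blast
  have ne: "sphere (0::real^'n) 1 \<noteq> {}"
    using norm_axis_1[of k] by (metis dist_0_norm empty_iff mem_sphere)
  obtain v where v: "v \<in> sphere 0 1" and vmax: "\<And>z. z \<in> sphere 0 1 \<Longrightarrow> q z \<le> q v"
    using continuous_attains_sup[OF compact_sphere ne cq] by blast
  define \<mu> where "\<mu> = q v"
  have vv: "v \<bullet> v = 1" using v by (simp add: norm_eq_1)
  have qscale: "q (c *\<^sub>R z) = c * c * q z" for c z
    by (simp add: q_def matrix_vector_mult_scaleR)
  have bound: "q z \<le> \<mu> * (z \<bullet> z)" for z
  proof (cases "z = 0")
    case True thus ?thesis by (simp add: q_def)
  next
    case False
    define u where "u = (1 / norm z) *\<^sub>R z"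
    have u: "u \<in> sphere 0 1" using False by (simp add: u_def)
    have z: "z = norm z *\<^sub>R u" using False by (simp add: u_def)
    have "q z = norm z * norm z * q u" by (subst z, rule qscale)
    also have "\<dots> \<le> norm z * norm z * \<mu>"
      using vmax[OF u] unfolding \<mu>_def by (simp add: mult_left_mono)
    also have "\<dots> = \<mu> * (z \<bullet> z)" by (simp add: power2_norm_eq_inner[symmetric] power2_eq_square)
    finally show ?thesis .
  qed
  have eig: "M *v v = \<mu> *\<^sub>R v"
  proof -
    define w where "w = M *v v - \<mu> *\<^sub>R v"
    define c where "c = \<mu> * (v \<bullet> w) - w \<bullet> (M *v v)"
    define e where "e = \<mu> * (w \<bullet> w) - q w"
    have "0 \<le> 2 * s * c + s * s * e" for s
    proof -
      have h1: "q (v + s *\<^sub>R w) \<le> \<mu> * ((v + s *\<^sub>R w) \<bullet> (v + s *\<^sub>R w))" by (rule bound)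
      have h2: "q (v + s *\<^sub>R w) = \<mu> + 2 * s * (w \<bullet> (M *v v)) + s * s * q w"
        unfolding q_def \<mu>_def
        by (simp add: matrix_vector_right_distrib matrix_vector_mult_scaleR inner_add_left
              inner_add_right sym[of v w] algebra_simps)
      have h3: "(v + s *\<^sub>R w) \<bullet> (v + s *\<^sub>R w) = 1 + 2 * s * (v \<bullet> w) + s * s * (w \<bullet> w)"
        using vv by (simp add: inner_add_left inner_add_right inner_commute algebra_simps)
      have "\<mu> + 2 * s * (w \<bullet> (M *v v)) + s * s * q w \<le> \<mu> * (1 + 2 * s * (v \<bullet> w) + s * s * (w \<bullet> w))"
        using h1 unfolding h2 h3 .
      moreover have "2 * s * c + s * s * e = \<mu> * (1 + 2 * s * (v \<bullet> w) + s * s * (w \<bullet> w)) - (\<mu> + 2 * s * (w \<bullet> (M *v v)) + s * s * q w)"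
        unfolding c_def e_def by (simp add: algebra_simps)
      ultimately show ?thesis by linarith
    qed
    hence "c = 0" by (rule quad_zero)
    moreover have "c = - (w \<bullet> w)"
      unfolding c_def w_def by (simp add: inner_diff_left inner_diff_right inner_commute algebra_simps)
    ultimately have "w = 0" by simp
    thus ?thesis unfolding w_def by simp
  qed
  define E where "E = {l. \<exists>v. v \<noteq> 0 \<and> M *v v = l *\<^sub>R v}"
  have v0: "v \<noteq> 0" using v by auto
  have muE: "\<mu> \<in> E" unfolding E_def using eig v0 by blast
  have finE: "finite E"
  proof -
    have "\<forall>l\<in>E. \<exists>v. v \<noteq> 0 \<and> M *v v = l *\<^sub>R v" unfolding E_def by blast
    then obtain ev where ev0: "\<forall>l\<in>E. ev l \<noteq> 0 \<and> M *v ev l = l *\<^sub>R ev l"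
      using bchoice[of E "\<lambda>l v. v \<noteq> 0 \<and> M *v v = l *\<^sub>R v"] by blast
    hence ev: "\<And>l. l \<in> E \<Longrightarrow> ev l \<noteq> 0 \<and> M *v ev l = l *\<^sub>R ev l" by blast
    have orth: "pairwise orthogonal (ev ` E)"
    proof (rule pairwiseI, clarsimp)
      fix l1 l2 assume l: "l1 \<in> E" "l2 \<in> E" "ev l1 \<noteq> ev l2"
      hence "l1 \<noteq> l2" by auto
      have "l1 * (ev l2 \<bullet> ev l1) = ev l2 \<bullet> (M *v ev l1)" using ev[OF l(1)] by simp
      also have "\<dots> = ev l1 \<bullet> (M *v ev l2)" by (rule sym)
      also have "\<dots> = l2 * (ev l1 \<bullet> ev l2)" using ev[OF l(2)] by simp
      finally have "(l1 - l2) * (ev l1 \<bullet> ev l2) = 0" by (simp add: inner_commute algebra_simps)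
      thus "orthogonal (ev l1) (ev l2)" using \<open>l1 \<noteq> l2\<close> by (simp add: orthogonal_def)
    qed
    have "0 \<notin> ev ` E" using ev by auto
    hence "independent (ev ` E)" using pairwise_orthogonal_independent[OF orth] by simp
    hence fin: "finite (ev ` E)" using independent_imp_finite by blast
    have "inj_on ev E"
    proof (rule inj_onI)
      fix l1 l2 assume l: "l1 \<in> E" "l2 \<in> E" "ev l1 = ev l2"
      hence "l1 *\<^sub>R ev l1 = l2 *\<^sub>R ev l1" using ev by metis
      thus "l1 = l2" using ev[OF l(1)] by simp
    qed
    thus ?thesis using fin finite_imageD by blast
  qed
  have "\<mu> \<le> lambda_max M" unfolding lambda_max_def using Max_ge[OF finE muE] E_def by simp
  hence "\<mu> * (x \<bullet> x) \<le> lambda_max M * (x \<bullet> x)" by (simp add: mult_right_mono)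
  thus ?thesis using bound[of x] unfolding q_def by linarith
qed


lemma comp_zero_deriv:
  fixes t :: "('a::real_inner) \<times> real \<Rightarrow> real"
  assumes d: "\<And>p. p \<in> S \<Longrightarrow> (t has_derivative (\<lambda>(h, k). ta p \<bullet> h + tb p * k)) (at p within S)"
    and sub: "(\<lambda>u. (a + u *\<^sub>R a, b)) ` {-1..0} \<subseteq> S"
    and z: "ta (a, b) = 0" "tb (a, b) = 0"
  shows "((\<lambda>u. t (a + u *\<^sub>R a, b)) has_real_derivative 0) (at 0 within {-1..0})"
proof -
  have c1: "((\<lambda>u. a + u *\<^sub>R a) has_derivative (\<lambda>y. 0 + y *\<^sub>R a)) (at 0 within {-1..0})"
    by (rule has_derivative_add[OF has_derivative_const has_derivative_scaleR_left[OF has_derivative_ident]])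
  have c2: "((\<lambda>u. (a + u *\<^sub>R a, b)) has_derivative (\<lambda>y. (0 + y *\<^sub>R a, 0))) (at 0 within {-1..0})"
    by (rule has_derivative_Pair[OF c1 has_derivative_const])
  have z0: "(0::real) \<in> {-1..0}" by simp
  have gd: "((\<lambda>u. t (a + u *\<^sub>R a, b)) has_derivative
      (\<lambda>y. (\<lambda>(h, k). ta ((\<lambda>u. (a + u *\<^sub>R a, b)) 0) \<bullet> h + tb ((\<lambda>u. (a + u *\<^sub>R a, b)) 0) * k) (0 + y *\<^sub>R a, 0)))
      (at 0 within {-1..0})"
    by (rule has_derivative_in_compose2[OF d sub z0 c2])
  show ?thesis
    unfolding has_field_derivative_def
    by (rule has_derivative_eq_rhs[OF gd]) (simp add: fun_eq_iff z)
qed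
theorem lemma6p10:
  fixes t :: "(real^('n::finite)) \<times> real \<Rightarrow> real"
    and ta :: "(real^'n) \<times> real \<Rightarrow> real^'n"
    and tb :: "(real^'n) \<times> real \<Rightarrow> real"
    and taa :: "(real^'n) \<times> real \<Rightarrow> real^'n^'n"
    and tab :: "(real^'n) \<times> real \<Rightarrow> real^'n"
    and tba :: "(real^'n) \<times> real \<Rightarrow> real^'n"
    and tbb :: "(real^'n) \<times> real \<Rightarrow> real"
    and d \<eta> :: real
  defines "A \<equiv> {a :: real^'n. norm a \<le> d}"
    and "S \<equiv> {a :: real^'n. norm a \<le> d} \<times> {-\<eta>..\<eta>}"
    and "\<phi> \<equiv> (\<lambda>a. Inf ((\<lambda>b. t (a, b)) ` {-\<eta>..\<eta>}))"
  assumes d_pos: "d > 0" and eta_pos: "\<eta> > 0"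
    and t_deriv: "\<And>p. p \<in> S \<Longrightarrow>
       (t has_derivative (\<lambda>(h, k). ta p \<bullet> h + tb p * k)) (at p within S)"
    and ta_deriv: "\<And>p. p \<in> S \<Longrightarrow>
       (ta has_derivative (\<lambda>(h, k). taa p *v h + k *\<^sub>R tab p)) (at p within S)"
    and tb_deriv: "\<And>p. p \<in> S \<Longrightarrow>
       (tb has_derivative (\<lambda>(h, k). tba p \<bullet> h + tbb p * k)) (at p within S)"
    and cont: "continuous_on S taa" "continuous_on S tab" "continuous_on S tba"
      "continuous_on S tbb"
    and tbb_pos: "\<And>a b. a \<in> A \<Longrightarrow> b \<in> {-\<eta>..\<eta>} \<Longrightarrow> tbb (a, b) > 0"
    and tb_top: "\<And>a. a \<in> A \<Longrightarrow> tb (a, \<eta>) > 0"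
    and tb_bot: "\<And>a. a \<in> A \<Longrightarrow> tb (a, -\<eta>) < 0"
    and schur: "\<And>a b. a \<in> A \<Longrightarrow> b \<in> {-\<eta>..\<eta>} \<Longrightarrow>
       lambda_max (taa (a, b) - (1 / tbb (a, b)) *\<^sub>R outer (tab (a, b))) < 0"
    and boundary: "\<And>a. norm a = d \<Longrightarrow>
       \<exists>D < 0. ((\<lambda>s. \<phi> (a + s *\<^sub>R a)) has_real_derivative D) (at 0 within {-1..0})"
  shows "\<exists>a0 b0. (a0, b0) \<in> S \<and> ta (a0, b0) = 0 \<and> tb (a0, b0) = 0
      \<and> (\<forall>p\<in>S. ta p = 0 \<and> tb p = 0 \<longrightarrow> p = (a0, b0))
      \<and> (\<forall>a\<in>A. \<forall>b\<in>{-\<eta>..\<eta>}.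
           (\<phi> a = (SUP a'\<in>A. \<phi> a') \<and> t (a, b) = \<phi> a) \<longleftrightarrow> (a = a0 \<and> b = b0))"
proof -
  have A_eq: "A = cball 0 d" unfolding A_def by (auto simp: cball_def)
  have SA: "S = A \<times> {-\<eta>..\<eta>}" unfolding S_def A_def by simp
  have convS: "convex S" unfolding SA A_eq by (auto intro!: convex_Times simp: convex_real_interval)
  have compS: "compact S" unfolding SA A_eq by (intro compact_Times compact_cball compact_Icc)
  have segS: "p + s *\<^sub>R (q - p) \<in> S" if "p \<in> S" "q \<in> S" "s \<in> {0..1}" for p q s
  proof -
    have "p + s *\<^sub>R (q - p) = (1 - s) *\<^sub>R p + s *\<^sub>R q" by (simp add: algebra_simps)
    thus ?thesis using convexD[OF convS that(1) that(2), of "1-s" s] that by auto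
  qed
  have tbbS: "tbb p > 0" if "p \<in> S" for p
    using that tbb_pos unfolding SA by (cases p) auto
  have contt: "continuous_on S t" by (rule has_derivative_continuous_on[OF t_deriv])
  have conttb: "continuous_on S tb" by (rule has_derivative_continuous_on[OF tb_deriv])
  have Sne: "(0, 0) \<in> S" unfolding S_def using d_pos eta_pos by auto
  have tb_mono: "tb (a, b1) < tb (a, b2)" if "a \<in> A" "-\<eta> \<le> b1" "b1 < b2" "b2 \<le> \<eta>" for a b1 b2
  proof -
    have p: "(a, b1) \<in> S" "(a, b2) \<in> S" using that unfolding SA by auto
    obtain s where s: "s \<in> {0<..<1}" and eq: "tb (a, b2) - tb (a, b1) =
       (\<lambda>(h, k). tba ((a, b1) + s *\<^sub>R ((a, b2) - (a, b1))) \<bullet> h + tbb ((a, b1) + s *\<^sub>R ((a, b2) - (a, b1))) * k) ((a, b2) - (a, b1))"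
      using mvt_seg[OF convS p(1) p(2) tb_deriv] by blast
    have xi: "(a, b1) + s *\<^sub>R ((a, b2) - (a, b1)) \<in> S" using segS[OF p] s by auto
    have "tb (a, b2) - tb (a, b1) = tbb ((a, b1) + s *\<^sub>R ((a, b2) - (a, b1))) * (b2 - b1)"
      using eq by simp
    moreover have "tbb ((a, b1) + s *\<^sub>R ((a, b2) - (a, b1))) * (b2 - b1) > 0"
      using tbbS[OF xi] that by simp
    ultimately show ?thesis by simp
  qed
  have tb_uniq: "b = b'" if "a \<in> A" "b \<in> {-\<eta>..\<eta>}" "b' \<in> {-\<eta>..\<eta>}" "tb (a, b) = 0" "tb (a, b') = 0" for a b b'
  proof (rule ccontr)
    assume "b \<noteq> b'"
    hence "b < b' \<or> b' < b" by auto
    thus False using tb_mono[of a b b'] tb_mono[of a b' b] that by auto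
  qed
  have ivt: "\<exists>b\<in>{-\<eta>..\<eta>}. tb (a, b) = 0" if "a \<in> A" for a
  proof -
    have c: "continuous_on {-\<eta>..\<eta>} (\<lambda>b. tb (a, b))"
      by (rule continuous_on_compose2[OF conttb]) (use that in \<open>auto simp: SA intro!: continuous_intros\<close>)
    show ?thesis using IVT'[of "\<lambda>b. tb (a, b)" "-\<eta>" 0 \<eta>, OF _ _ _ c] tb_top[OF that] tb_bot[OF that] eta_pos
      by force
  qed
  define \<beta> where "\<beta> a = (THE b. b \<in> {-\<eta>..\<eta>} \<and> tb (a, b) = 0)" for a
  have \<beta>prop: "\<beta> a \<in> {-\<eta>..\<eta>} \<and> tb (a, \<beta> a) = 0" if "a \<in> A" for a
  proof -
    have "\<exists>!b. b \<in> {-\<eta>..\<eta>} \<and> tb (a, b) = 0" using ivt[OF that] tb_uniq[OF that] by blast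
    thus ?thesis unfolding \<beta>_def by (rule theI')
  qed
  have \<beta>I: "\<beta> a \<in> {-\<eta>..\<eta>}" and tb\<beta>: "tb (a, \<beta> a) = 0" if "a \<in> A" for a
    using \<beta>prop[OF that] by auto
  have \<beta>open: "\<beta> a \<in> {-\<eta><..<\<eta>}" if "a \<in> A" for a
  proof -
    have "\<beta> a \<noteq> \<eta>" using tb_top[OF that] tb\<beta>[OF that] by auto
    moreover have "\<beta> a \<noteq> -\<eta>" using tb_bot[OF that] tb\<beta>[OF that] by auto
    ultimately show ?thesis using \<beta>I[OF that] by auto
  qed
  have \<beta>eq: "b = \<beta> a" if "a \<in> A" "b \<in> {-\<eta>..\<eta>}" "tb (a, b) = 0" for a b
    using tb_uniq[OF that(1,2) \<beta>I[OF that(1)] that(3) tb\<beta>[OF that(1)]] .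
  have \<beta>S: "(a, \<beta> a) \<in> S" if "a \<in> A" for a using \<beta>I[OF that] that unfolding SA by auto
  have t_strict: "t (a, \<beta> a) < t (a, b)" if "a \<in> A" "b \<in> {-\<eta>..\<eta>}" "b \<noteq> \<beta> a" for a b
  proof -
    define b1 where "b1 = \<beta> a"
    have p: "(a, b1) \<in> S" "(a, b) \<in> S" using that \<beta>S unfolding SA b1_def by auto
    obtain s where s: "s \<in> {0<..<1}" and eq: "t (a, b) - t (a, b1) =
       (\<lambda>(h, k). ta ((a, b1) + s *\<^sub>R ((a, b) - (a, b1))) \<bullet> h + tb ((a, b1) + s *\<^sub>R ((a, b) - (a, b1))) * k) ((a, b) - (a, b1))"
      using mvt_seg[OF convS p(1) p(2) t_deriv] by blast
    define c where "c = b1 + s * (b - b1)"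
    have eq2: "t (a, b) - t (a, b1) = tb (a, c) * (b - b1)" using eq by (simp add: c_def)
    have b1I: "b1 \<in> {-\<eta>..\<eta>}" using \<beta>I[OF that(1)] b1_def by simp
    have tb1: "tb (a, b1) = 0" using tb\<beta>[OF that(1)] b1_def by simp
    have cb1: "c - b1 = s * (b - b1)" by (simp add: c_def algebra_simps)
    have cb: "c - b = (1 - s) * (b1 - b)" by (simp add: c_def algebra_simps)
    have "tb (a, c) * (b - b1) > 0"
    proof (cases "b1 < b")
      assume T: "b1 < b"
      have "s * (b - b1) > 0" using s T by simp
      moreover have "(1 - s) * (b1 - b) \<le> 0" using s T by (simp add: mult_nonneg_nonpos)
      ultimately have "b1 < c" "c \<le> b" using cb1 cb by (metis diff_gt_0_iff_gt, metis diff_le_0_iff_le)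
      hence "tb (a, b1) < tb (a, c)" using tb_mono[OF that(1)] b1I that(2) by auto
      thus ?thesis using T tb1 by simp
    next
      assume F0: "\<not> b1 < b"
      hence F: "b < b1" using that(3) b1_def by auto
      have "s * (b - b1) < 0" using s F by (simp add: mult_pos_neg)
      moreover have "(1 - s) * (b1 - b) \<ge> 0" using s F by simp
      ultimately have "c < b1" "b \<le> c" using cb1 cb by (metis diff_less_0_iff_less, metis diff_ge_0_iff_ge)
      hence "tb (a, c) < tb (a, b1)" using tb_mono[OF that(1)] b1I that(2) by auto
      thus ?thesis using F tb1 by (simp add: mult_neg_neg)
    qed
    thus ?thesis using eq2 b1_def by simp
  qed
  have \<phi>eq: "\<phi> a = t (a, \<beta> a)" if "a \<in> A" for a
    unfolding \<phi>_def
    by (rule cInf_eq_minimum) (use \<beta>I[OF that] t_strict[OF that] in \<open>force+\<close>)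
  have \<phi>le: "\<phi> a \<le> t (a, b)" if "a \<in> A" "b \<in> {-\<eta>..\<eta>}" for a b
    using \<phi>eq[OF that(1)] t_strict[OF that] by (cases "b = \<beta> a") auto
  have t_eq_\<phi>: "t (a, b) = \<phi> a \<longleftrightarrow> b = \<beta> a" if "a \<in> A" "b \<in> {-\<eta>..\<eta>}" for a b
    using \<phi>eq[OF that(1)] t_strict[OF that] by (cases "b = \<beta> a") auto
  obtain K where K: "\<And>p. p \<in> S \<Longrightarrow> norm (tba p) \<le> K"
    using compact_imp_bounded[OF compact_continuous_image[OF cont(3) compS]]
    unfolding bounded_iff by blast
  have K0: "0 \<le> K" using K[OF Sne] norm_ge_zero order_trans by blast
  obtain p0 where p0: "p0 \<in> S" "\<And>p. p \<in> S \<Longrightarrow> tbb p0 \<le> tbb p"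
    using continuous_attains_inf[OF compS _ cont(4)] Sne by blast
  define m where "m = tbb p0"
  have m: "m > 0" "\<And>p. p \<in> S \<Longrightarrow> m \<le> tbb p" using p0 tbbS unfolding m_def by auto
  have \<beta>_lip: "\<bar>\<beta> a' - \<beta> a\<bar> \<le> (K / m) * norm (a' - a)" if aA: "a \<in> A" and a'A: "a' \<in> A" for a a'
  proof -
    obtain s where s: "s \<in> {0<..<1}" and eq: "tb (a', \<beta> a') - tb (a, \<beta> a) =
       (\<lambda>(h, k). tba ((a, \<beta> a) + s *\<^sub>R ((a', \<beta> a') - (a, \<beta> a))) \<bullet> h + tbb ((a, \<beta> a) + s *\<^sub>R ((a', \<beta> a') - (a, \<beta> a))) * k) ((a', \<beta> a') - (a, \<beta> a))"
      using mvt_seg[OF convS \<beta>S[OF aA] \<beta>S[OF a'A] tb_deriv] by blast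
    define \<xi> where "\<xi> = (a, \<beta> a) + s *\<^sub>R ((a', \<beta> a') - (a, \<beta> a))"
    have \<xi>S: "\<xi> \<in> S" unfolding \<xi>_def using segS[OF \<beta>S[OF aA] \<beta>S[OF a'A]] s by auto
    have "0 = tba \<xi> \<bullet> (a' - a) + tbb \<xi> * (\<beta> a' - \<beta> a)"
      using eq tb\<beta>[OF aA] tb\<beta>[OF a'A] unfolding \<xi>_def by simp
    hence "tbb \<xi> * (\<beta> a' - \<beta> a) = - (tba \<xi> \<bullet> (a' - a))" by simp
    hence "\<bar>tbb \<xi> * (\<beta> a' - \<beta> a)\<bar> = \<bar>tba \<xi> \<bullet> (a' - a)\<bar>" by simp
    hence "tbb \<xi> * \<bar>\<beta> a' - \<beta> a\<bar> = \<bar>tba \<xi> \<bullet> (a' - a)\<bar>"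
      using tbbS[OF \<xi>S] by (simp add: abs_mult)
    also have "\<dots> \<le> norm (tba \<xi>) * norm (a' - a)" by (rule Cauchy_Schwarz_ineq2)
    also have "\<dots> \<le> K * norm (a' - a)" using K[OF \<xi>S] by (simp add: mult_right_mono)
    finally have "m * \<bar>\<beta> a' - \<beta> a\<bar> \<le> K * norm (a' - a)"
      using m(2)[OF \<xi>S] mult_right_mono[of m "tbb \<xi>" "\<bar>\<beta> a' - \<beta> a\<bar>"] by simp
    thus ?thesis using m(1) by (simp add: field_simps)
  qed
  have \<beta>_cont: "continuous_on A \<beta>"
  proof (rule lipschitz_on_continuous_on[of "K / m"], unfold lipschitz_on_def, intro conjI ballI)
    show "0 \<le> K / m" using K0 m(1) by simp
    fix x y assume "x \<in> A" "y \<in> A"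
    thus "dist (\<beta> x) (\<beta> y) \<le> K / m * dist x y"
      using \<beta>_lip[of y x] by (simp add: dist_real_def dist_norm)
  qed
  have \<phi>_cont: "continuous_on A \<phi>"
  proof -
    have "continuous_on A (\<lambda>a. t (a, \<beta> a))"
      by (rule continuous_on_compose2[OF contt]) (use \<beta>S in \<open>auto intro!: continuous_intros \<beta>_cont\<close>)
    thus ?thesis by (rule continuous_on_eq) (simp add: \<phi>eq)
  qed
  define U where "U = ball (0::real^'n) d \<times> {-\<eta><..<\<eta>}"
  have openU: "open U" unfolding U_def by (intro open_Times open_ball open_greaterThanLessThan)
  have US: "U \<subseteq> S" unfolding U_def SA A_eq by auto
  have t_at: "(t has_derivative (\<lambda>(h, k). ta p \<bullet> h + tb p * k)) (at p)" if "p \<in> U" for p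
    using has_derivative_subset[OF t_deriv[OF subsetD[OF US that]] US] at_within_open[OF that openU] by simp
  have ta_at: "(ta has_derivative (\<lambda>(h, k). taa p *v h + k *\<^sub>R tab p)) (at p)" if "p \<in> U" for p
    using has_derivative_subset[OF ta_deriv[OF subsetD[OF US that]] US] at_within_open[OF that openU] by simp
  have tb_at: "(tb has_derivative (\<lambda>(h, k). tba p \<bullet> h + tbb p * k)) (at p)" if "p \<in> U" for p
    using has_derivative_subset[OF tb_deriv[OF subsetD[OF US that]] US] at_within_open[OF that openU] by simp
  have inA: "a \<in> A" if "norm a < d" for a using that unfolding A_def by simp
  have PU: "(a, \<beta> a) \<in> U" if "norm a < d" for a
    using that \<beta>open[OF inA[OF that]] unfolding U_def by simp
  have \<beta>_der: "((\<lambda>u. \<beta> (a + u *\<^sub>R h)) has_real_derivative - (tba (a, \<beta> a) \<bullet> h) / tbb (a, \<beta> a)) (at 0)"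
    if a: "norm a < d" for a h
  proof -
    define P where "P = (a, \<beta> a)"
    define Pu where "Pu u = (a + u *\<^sub>R h, \<beta> (a + u *\<^sub>R h))" for u
    have aA: "a \<in> A" by (rule inA[OF a])
    have PS: "P \<in> S" unfolding P_def by (rule \<beta>S[OF aA])
    have lin: "((\<lambda>u. a + u *\<^sub>R h) \<longlongrightarrow> a) (at 0)"
    proof -
      have "((\<lambda>u. a + u *\<^sub>R h) \<longlongrightarrow> a + 0 *\<^sub>R h) (at 0)" by (intro tendsto_intros)
      thus ?thesis by simp
    qed
    have evA: "eventually (\<lambda>u. a + u *\<^sub>R h \<in> A) (at 0)"
    proof -
      have "eventually (\<lambda>u. a + u *\<^sub>R h \<in> ball 0 d) (at 0)"
        by (rule topological_tendstoD[OF lin open_ball]) (use a in simp)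
      thus ?thesis by eventually_elim (auto simp: A_def)
    qed
    have PuS: "Pu u \<in> S" if "a + u *\<^sub>R h \<in> A" for u
      unfolding Pu_def by (rule \<beta>S[OF that])
    have mv: "\<exists>s. a + u *\<^sub>R h \<in> A \<longrightarrow> s \<in> {0<..<1} \<and> tb (Pu u) - tb P =
       (\<lambda>(h', k). tba (P + s *\<^sub>R (Pu u - P)) \<bullet> h' + tbb (P + s *\<^sub>R (Pu u - P)) * k) (Pu u - P)" for u
      using mvt_seg[OF convS PS PuS tb_deriv] by blast
    hence "\<forall>u. \<exists>s. a + u *\<^sub>R h \<in> A \<longrightarrow> s \<in> {0<..<1} \<and> tb (Pu u) - tb P =
       (\<lambda>(h', k). tba (P + s *\<^sub>R (Pu u - P)) \<bullet> h' + tbb (P + s *\<^sub>R (Pu u - P)) * k) (Pu u - P)" by blast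
    then obtain \<sigma> where \<sigma>0: "\<forall>u. a + u *\<^sub>R h \<in> A \<longrightarrow> \<sigma> u \<in> {0<..<1} \<and> tb (Pu u) - tb P =
       (\<lambda>(h', k). tba (P + \<sigma> u *\<^sub>R (Pu u - P)) \<bullet> h' + tbb (P + \<sigma> u *\<^sub>R (Pu u - P)) * k) (Pu u - P)"
      by (rule choice[THEN exE])
    hence \<sigma>: "\<And>u. a + u *\<^sub>R h \<in> A \<Longrightarrow> \<sigma> u \<in> {0<..<1} \<and> tb (Pu u) - tb P =
       (\<lambda>(h', k). tba (P + \<sigma> u *\<^sub>R (Pu u - P)) \<bullet> h' + tbb (P + \<sigma> u *\<^sub>R (Pu u - P)) * k) (Pu u - P)"
      by blast
    define \<xi> where "\<xi> u = P + \<sigma> u *\<^sub>R (Pu u - P)" for u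
    have \<xi>S: "\<xi> u \<in> S" if "a + u *\<^sub>R h \<in> A" for u
      unfolding \<xi>_def using segS[OF PS PuS[OF that]] \<sigma>[OF that] by auto
    have key: "0 = u * (tba (\<xi> u) \<bullet> h) + tbb (\<xi> u) * (\<beta> (a + u *\<^sub>R h) - \<beta> a)"
      if "a + u *\<^sub>R h \<in> A" for u
    proof -
      have "tb (Pu u) = 0" unfolding Pu_def using tb\<beta>[OF that] .
      moreover have "tb P = 0" unfolding P_def using tb\<beta>[OF aA] .
      moreover have "Pu u - P = (u *\<^sub>R h, \<beta> (a + u *\<^sub>R h) - \<beta> a)" unfolding Pu_def P_def by simp
      ultimately show ?thesis using \<sigma>[OF that] unfolding \<xi>_def by simp
    qed
    have Pu_lim: "(Pu \<longlongrightarrow> P) (at 0)"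
      unfolding Pu_def P_def
      by (intro tendsto_Pair lin continuous_on_tendsto_compose[OF \<beta>_cont lin aA evA])
    have \<xi>_lim: "(\<xi> \<longlongrightarrow> P) (at 0)"
    proof (rule tendsto_by_dist_bound)
      show "((\<lambda>u. dist (Pu u) P) \<longlongrightarrow> 0) (at 0)" using Pu_lim tendsto_dist_iff by blast
      show "\<forall>\<^sub>F u in at 0. dist (\<xi> u) P \<le> dist (Pu u) P"
        using evA
      proof eventually_elim
        case (elim u)
        have "dist (\<xi> u) P = \<sigma> u * norm (Pu u - P)"
          using \<sigma>[OF elim] unfolding \<xi>_def by (simp add: dist_norm)
        also have "\<dots> \<le> norm (Pu u - P)"
          using \<sigma>[OF elim] by (simp add: mult_left_le_one_le)
        finally show ?case by (simp add: dist_norm)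
      qed
    qed
    have \<xi>ev: "eventually (\<lambda>u. \<xi> u \<in> S) (at 0)" using evA by eventually_elim (rule \<xi>S)
    have PS': "P \<in> S" by (rule PS)
    have tbbP: "tbb P \<noteq> 0" using tbbS[OF PS] by simp
    have lim: "((\<lambda>u. - (tba (\<xi> u) \<bullet> h) / tbb (\<xi> u)) \<longlongrightarrow> - (tba P \<bullet> h) / tbb P) (at 0)"
      by (intro tendsto_intros continuous_on_tendsto_compose[OF cont(3) \<xi>_lim PS \<xi>ev]
          continuous_on_tendsto_compose[OF cont(4) \<xi>_lim PS \<xi>ev] tbbP)
    have "((\<lambda>u. (\<beta> (a + u *\<^sub>R h) - \<beta> a) / u) \<longlongrightarrow> - (tba P \<bullet> h) / tbb P) (at 0)"
    proof (rule Lim_transform_eventually[OF lim])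
      show "\<forall>\<^sub>F u in at 0. - (tba (\<xi> u) \<bullet> h) / tbb (\<xi> u) = (\<beta> (a + u *\<^sub>R h) - \<beta> a) / u"
        using evA eventually_neq_at_within[of 0 0 UNIV]
      proof eventually_elim
        case (elim u)
        have pos: "tbb (\<xi> u) > 0" using tbbS[OF \<xi>S[OF elim(1)]] .
        have "tbb (\<xi> u) * (\<beta> (a + u *\<^sub>R h) - \<beta> a) = - (u * (tba (\<xi> u) \<bullet> h))"
          using key[OF elim(1)] by simp
        thus ?case using pos elim(2) by (simp add: field_simps)
      qed
    qed
    thus ?thesis unfolding DERIV_def P_def by simp
  qed
  have curve_der: "((\<lambda>u. (a + u *\<^sub>R h, \<beta> (a + u *\<^sub>R h))) has_derivative
      (\<lambda>u. (u *\<^sub>R h, (- (tba (a, \<beta> a) \<bullet> h) / tbb (a, \<beta> a)) * u))) (at 0)"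
    if a: "norm a < d" for a h
  proof (rule has_derivative_Pair)
    show "((\<lambda>u. a + u *\<^sub>R h) has_derivative (\<lambda>u. u *\<^sub>R h)) (at 0)"
      by (auto intro!: derivative_eq_intros)
    show "((\<lambda>u. \<beta> (a + u *\<^sub>R h)) has_derivative (\<lambda>u. (- (tba (a, \<beta> a) \<bullet> h) / tbb (a, \<beta> a)) * u)) (at 0)"
      using \<beta>_der[OF a, of h] unfolding has_field_derivative_def
      by (rule has_derivative_eq_rhs) (simp add: fun_eq_iff)
  qed
  have \<phi>_der: "((\<lambda>u. \<phi> (a + u *\<^sub>R h)) has_real_derivative ta (a, \<beta> a) \<bullet> h) (at 0)"
    if a: "norm a < d" for a h
  proof -
    define c where "c u = (a + u *\<^sub>R h, \<beta> (a + u *\<^sub>R h))" for u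
    have td: "(t has_derivative (\<lambda>(h', k). ta (a, \<beta> a) \<bullet> h' + tb (a, \<beta> a) * k)) (at (c 0))"
      using t_at[OF PU[OF a]] unfolding c_def by simp
    have cd: "(c has_derivative (\<lambda>u. (u *\<^sub>R h, (- (tba (a, \<beta> a) \<bullet> h) / tbb (a, \<beta> a)) * u))) (at 0)"
      using curve_der[OF a, of h] unfolding c_def .
    have "((t \<circ> c) has_derivative (\<lambda>u. (ta (a, \<beta> a) \<bullet> h) * u)) (at 0)"
      by (rule has_derivative_eq_rhs[OF diff_chain_at[OF cd td]])
        (simp add: fun_eq_iff tb\<beta>[OF inA[OF a]] o_def mult.commute)
    hence d1: "((\<lambda>u. t (c u)) has_real_derivative ta (a, \<beta> a) \<bullet> h) (at 0)"
      by (simp add: has_field_derivative_def o_def)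
    show ?thesis
    proof (rule has_field_derivative_transform_within_open[OF d1])
      show "open {u. norm (a + u *\<^sub>R h) < d}"
        by (rule open_Collect_less) (intro continuous_intros)+
      show "0 \<in> {u. norm (a + u *\<^sub>R h) < d}" using a by simp
      fix z assume "z \<in> {u. norm (a + u *\<^sub>R h) < d}"
      hence "a + z *\<^sub>R h \<in> A" using inA by simp
      thus "t (c z) = \<phi> (a + z *\<^sub>R h)" unfolding c_def using \<phi>eq by simp
    qed
  qed
  define Q where "Q a h = (taa (a, \<beta> a) *v h) \<bullet> h - (tab (a, \<beta> a) \<bullet> h) * (tba (a, \<beta> a) \<bullet> h) / tbb (a, \<beta> a)" for a h
  have k_der: "((\<lambda>u. ta (a + u *\<^sub>R h, \<beta> (a + u *\<^sub>R h)) \<bullet> h) has_real_derivative Q a h) (at 0)"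
    if a: "norm a < d" for a h
  proof -
    define c where "c u = (a + u *\<^sub>R h, \<beta> (a + u *\<^sub>R h))" for u
    define D where "D = - (tba (a, \<beta> a) \<bullet> h) / tbb (a, \<beta> a)"
    have tbbP: "tbb (a, \<beta> a) \<noteq> 0" using tbbS[OF \<beta>S[OF inA[OF a]]] by simp
    have QD: "Q a h = (taa (a, \<beta> a) *v h) \<bullet> h + D * (tab (a, \<beta> a) \<bullet> h)"
      unfolding Q_def D_def using tbbP by (simp add: field_simps)
    have td: "(ta has_derivative (\<lambda>(h', k). taa (a, \<beta> a) *v h' + k *\<^sub>R tab (a, \<beta> a))) (at (c 0))"
      using ta_at[OF PU[OF a]] unfolding c_def by simp
    have cd: "(c has_derivative (\<lambda>u. (u *\<^sub>R h, D * u))) (at 0)"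
      using curve_der[OF a, of h] unfolding c_def D_def .
    have ch: "((ta \<circ> c) has_derivative ((\<lambda>(h', k). taa (a, \<beta> a) *v h' + k *\<^sub>R tab (a, \<beta> a)) \<circ> (\<lambda>u. (u *\<^sub>R h, D * u)))) (at 0)"
      by (rule diff_chain_at[OF cd td])
    have "((\<lambda>u. (ta \<circ> c) u \<bullet> h) has_derivative (\<lambda>u. Q a h * u)) (at 0)"
    proof (rule has_derivative_eq_rhs[OF has_derivative_inner_left[OF ch]])
      show "(\<lambda>x. ((\<lambda>(h', k). taa (a, \<beta> a) *v h' + k *\<^sub>R tab (a, \<beta> a)) \<circ> (\<lambda>u. (u *\<^sub>R h, D * u))) x \<bullet> h) = (\<lambda>u. Q a h * u)"
        by (simp add: fun_eq_iff QD matrix_vector_mult_scaleR inner_add_left algebra_simps)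
    qed
    thus ?thesis by (simp add: has_field_derivative_def o_def c_def)
  qed
  \<comment> \<open>Step 5: negativity of the Schur complement quadratic form\<close>
  have Qneg: "Q a h < 0" if a: "norm a < d" and h: "h \<noteq> 0" for a h
  proof -
    define P where "P = (a, \<beta> a)"
    have PU': "P \<in> U" unfolding P_def by (rule PU[OF a])
    define f' where "f' y v = ta y \<bullet> fst v + tb y * snd v" for y v :: "(real^'n) \<times> real"
    define f'' where "f'' y v w = (taa y *v fst w + snd w *\<^sub>R tab y) \<bullet> fst v + (tba y \<bullet> fst w + tbb y * snd w) * snd v"
      for y v w :: "(real^'n) \<times> real"
    have d1: "(t has_derivative f' y) (at y)" if "y \<in> U" for y
      by (rule has_derivative_eq_rhs[OF t_at[OF that]]) (auto simp: f'_def fun_eq_iff)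
    have d2: "((\<lambda>z. f' z v) has_derivative f'' y v) (at y)" if "y \<in> U" for y v
      unfolding f'_def
      by (rule has_derivative_eq_rhs[OF has_derivative_add[OF has_derivative_inner_left[OF ta_at[OF that]]
            has_derivative_mult_left[OF tb_at[OF that]]]]) (auto simp: f''_def fun_eq_iff)
    have cU: "continuous_on U taa" "continuous_on U tab" "continuous_on U tba" "continuous_on U tbb"
      using continuous_on_subset[OF cont(1) US] continuous_on_subset[OF cont(2) US]
        continuous_on_subset[OF cont(3) US] continuous_on_subset[OF cont(4) US] by auto
    have cM: "continuous_on U (\<lambda>y. (taa y *v c) \<bullet> e)" for c e
    proof -
      have eq: "(\<lambda>y. (taa y *v c) \<bullet> e) = (\<lambda>y. \<Sum>i\<in>UNIV. (\<Sum>j\<in>UNIV. taa y $ i $ j * c $ j) * e $ i)"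
        by (simp add: fun_eq_iff matrix_vector_mult_def inner_vec_def)
      show ?thesis unfolding eq by (intro continuous_intros cU)
    qed
    have c2: "isCont (\<lambda>y. f'' y v w) P" for v w
    proof -
      have "continuous_on U (\<lambda>y. (taa y *v fst w) \<bullet> fst v + snd w * (tab y \<bullet> fst v) + (tba y \<bullet> fst w + tbb y * snd w) * snd v)"
        by (intro cM continuous_on_add continuous_on_mult continuous_on_const continuous_on_inner cU)
      hence "continuous_on U (\<lambda>y. f'' y v w)"
        by (rule continuous_on_eq) (simp add: f''_def inner_add_left)
      thus ?thesis using continuous_on_eq_continuous_at[OF openU] PU' by blast
    qed
    have sch: "f'' P v w = f'' P w v" for v w
      by (rule schwarz[OF openU PU' d1 d2 c2])
    have symA: "x \<bullet> (taa P *v y) = y \<bullet> (taa P *v x)" for x y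
      using sch[of "(x, 0)" "(y, 0)"] by (simp add: f''_def inner_commute)
    have mix: "tab P \<bullet> h = tba P \<bullet> h"
      using sch[of "(h, 0)" "(0, 1)"] by (simp add: f''_def)
    define M where "M = taa P - (1 / tbb P) *\<^sub>R outer (tab P)"
    have Mv: "M *v y = taa P *v y - ((1 / tbb P) * (tab P \<bullet> y)) *\<^sub>R tab P" for y
      unfolding M_def
      by (simp add: matrix_vector_mult_diff_rdistrib scaleR_matrix_vector_assoc[symmetric] outer_mult)
    have symM: "x \<bullet> (M *v y) = y \<bullet> (M *v x)" for x y
      unfolding Mv using symA[of x y] inner_commute[of x "tab P"] inner_commute[of y "tab P"]
      by (simp add: inner_diff_right algebra_simps)
    have aA: "a \<in> A" by (rule inA[OF a])
    have lm: "lambda_max M < 0" unfolding M_def P_def by (rule schur[OF aA \<beta>I[OF aA]])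
    have hh: "h \<bullet> h > 0" using h by simp
    have "h \<bullet> (M *v h) \<le> lambda_max M * (h \<bullet> h)" by (rule rayleigh[OF symM])
    also have "\<dots> < 0" using lm hh by (simp add: mult_neg_pos)
    finally have neg: "h \<bullet> (M *v h) < 0" .
    have tbbP: "tbb P \<noteq> 0" using tbbS[OF US[THEN subsetD, OF PU']] by simp
    have e1: "h \<bullet> (M *v h) = h \<bullet> (taa P *v h) - (1 / tbb P) * (tab P \<bullet> h) * (h \<bullet> tab P)"
      unfolding Mv by (simp add: inner_diff_right)
    have "h \<bullet> (M *v h) = Q a h"
      unfolding e1 Q_def P_def[symmetric] mix[symmetric] inner_commute[of h "tab P"] inner_commute[of h "taa P *v h"]
      using tbbP by (simp add: field_simps)
    thus ?thesis using neg by simp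
  qed
  have ball_seg: "norm (a1 + s *\<^sub>R (a2 - a1)) < d"
    if "norm a1 < d" "norm a2 < d" "s \<in> {0..1}" for a1 a2 :: "real^'n" and s
  proof -
    have "a1 + s *\<^sub>R (a2 - a1) = (1 - s) *\<^sub>R a1 + s *\<^sub>R a2" by (simp add: algebra_simps)
    moreover have "(1 - s) *\<^sub>R a1 + s *\<^sub>R a2 \<in> ball 0 d"
      by (rule convexD[OF convex_ball]) (use that in auto)
    ultimately show ?thesis by simp
  qed
  have seg_lemma: "\<phi> a2 < \<phi> a1"
    if a1: "norm a1 < d" and a2: "norm a2 < d" and ne: "a1 \<noteq> a2" and crit: "ta (a1, \<beta> a1) = 0" for a1 a2
  proof -
    define h where "h = a2 - a1"
    have h0: "h \<noteq> 0" using ne unfolding h_def by simp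
    define g where "g u = \<phi> (a1 + u *\<^sub>R h)" for u
    define kk where "kk u = ta (a1 + u *\<^sub>R h, \<beta> (a1 + u *\<^sub>R h)) \<bullet> h" for u
    have inb: "norm (a1 + s *\<^sub>R h) < d" if "s \<in> {0..1}" for s
      unfolding h_def by (rule ball_seg[OF a1 a2 that])
    have shift: "a1 + (u + s) *\<^sub>R h = (a1 + s *\<^sub>R h) + u *\<^sub>R h" for u s
      by (simp add: algebra_simps)
    have gder: "DERIV g s :> kk s" if "s \<in> {0..1}" for s
    proof -
      have "((\<lambda>u. g (u + s)) has_real_derivative kk s) (at 0)"
        using \<phi>_der[OF inb[OF that], of h] unfolding g_def kk_def shift by simp
      thus ?thesis using DERIV_shift[of g "kk s" 0 s] by simp
    qed
    have kder: "DERIV kk s :> Q (a1 + s *\<^sub>R h) h" if "s \<in> {0..1}" for s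
    proof -
      have "((\<lambda>u. kk (u + s)) has_real_derivative Q (a1 + s *\<^sub>R h) h) (at 0)"
        using k_der[OF inb[OF that], of h] unfolding kk_def shift by simp
      thus ?thesis using DERIV_shift[of kk "Q (a1 + s *\<^sub>R h) h" 0 s] by simp
    qed
    have k0: "kk 0 = 0" unfolding kk_def using crit by simp
    have kneg: "kk s < 0" if "0 < s" "s \<le> 1" for s
    proof -
      have "kk 0 > kk s"
      proof (rule DERIV_neg_imp_decreasing[OF that(1)])
        fix x assume "0 \<le> x" "x \<le> s"
        hence x: "x \<in> {0..1}" using that by auto
        show "\<exists>y. DERIV kk x :> y \<and> y < 0"
          using kder[OF x] Qneg[OF inb[OF x] h0] by blast
      qed
      thus ?thesis using k0 by simp
    qed
    obtain z where z: "0 < z" "z < 1" and eq: "g 1 - g 0 = (1 - 0) * kk z"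
      using MVT2[of 0 1 g kk] gder by auto
    have "g 1 < g 0" using eq kneg[of z] z by simp
    moreover have "g 1 = \<phi> a2" unfolding g_def h_def by simp
    moreover have "g 0 = \<phi> a1" unfolding g_def by simp
    ultimately show ?thesis by simp
  qed
  have compA: "compact A" unfolding A_eq by (rule compact_cball)
  have Ane: "A \<noteq> {}" using d_pos unfolding A_def by (auto intro!: exI[of _ 0])
  obtain a0 where a0A: "a0 \<in> A" and a0max: "\<And>a. a \<in> A \<Longrightarrow> \<phi> a \<le> \<phi> a0"
    using continuous_attains_sup[OF compA Ane \<phi>_cont] by blast
  have line_in_A: "a + u *\<^sub>R a \<in> A" if "norm a = d" "u \<in> {-1..0}" for a u
  proof -
    have "a + u *\<^sub>R a = (1 + u) *\<^sub>R a" by (simp add: algebra_simps)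
    moreover have "norm ((1 + u) *\<^sub>R a) = (1 + u) * d" using that by simp
    moreover have "(1 + u) * d \<le> d" using that d_pos by (simp add: mult_le_cancel_right1)
    ultimately show ?thesis unfolding A_def by simp
  qed
  have max_int: "norm a < d" if aA: "a \<in> A" and amax: "\<And>a'. a' \<in> A \<Longrightarrow> \<phi> a' \<le> \<phi> a" for a
  proof (rule ccontr)
    assume "\<not> norm a < d"
    hence nd: "norm a = d" using aA unfolding A_def by simp
    obtain D where D: "D < 0" and Dd: "((\<lambda>s. \<phi> (a + s *\<^sub>R a)) has_real_derivative D) (at 0 within {-1..0})"
      using boundary[OF nd] by blast
    have "0 \<le> D"
    proof (rule deriv_left_compare[OF Dd, of "\<lambda>_. 0"])
      show "((\<lambda>_. 0) has_real_derivative 0) (at 0 within {-1..0})" by (rule DERIV_const)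
      fix u :: real assume "u \<in> {-1..0}"
      thus "\<phi> (a + u *\<^sub>R a) - \<phi> (a + 0 *\<^sub>R a) \<le> 0 - 0"
        using amax[OF line_in_A[OF nd]] by simp
    qed
    thus False using D by simp
  qed
  have max_crit: "ta (a, \<beta> a) = 0" if a: "norm a < d" and amax: "\<And>a'. a' \<in> A \<Longrightarrow> \<phi> a' \<le> \<phi> a" for a
  proof -
    define h where "h = ta (a, \<beta> a)"
    define \<delta> where "\<delta> = (d - norm a) / (norm h + 1)"
    have nh: "norm h + 1 \<noteq> 0" using norm_ge_zero[of h] by linarith
    have \<delta>: "\<delta> > 0" unfolding \<delta>_def using a by (simp add: add_nonneg_pos)
    have "ta (a, \<beta> a) \<bullet> h = 0"
    proof (rule DERIV_local_max[OF \<phi>_der[OF a, of h] \<delta>], intro allI impI)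
      fix y :: real assume y: "\<bar>0 - y\<bar> < \<delta>"
      have "norm (a + y *\<^sub>R h) \<le> norm a + \<bar>y\<bar> * norm h"
        using norm_triangle_ineq[of a "y *\<^sub>R h"] by simp
      also have "\<bar>y\<bar> * norm h \<le> \<delta> * (norm h + 1)"
        using y by (intro mult_mono) auto
      also have "\<delta> * (norm h + 1) = d - norm a" unfolding \<delta>_def using nh by simp
      finally have "a + y *\<^sub>R h \<in> A" unfolding A_def by simp
      thus "\<phi> (a + y *\<^sub>R h) \<le> \<phi> (a + 0 *\<^sub>R h)" using amax by simp
    qed
    thus ?thesis unfolding h_def by simp
  qed
  define b0 where "b0 = \<beta> a0"
  have a0int: "norm a0 < d" by (rule max_int[OF a0A a0max])
  have S0: "(a0, b0) \<in> S" unfolding b0_def by (rule \<beta>S[OF a0A])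
  have ta0: "ta (a0, b0) = 0" unfolding b0_def by (rule max_crit[OF a0int a0max])
  have tb0: "tb (a0, b0) = 0" unfolding b0_def by (rule tb\<beta>[OF a0A])
  have crit_int: "norm a < d" if aA: "a \<in> A" and cr: "ta (a, \<beta> a) = 0" for a
  proof (rule ccontr)
    assume "\<not> norm a < d"
    hence nd: "norm a = d" using aA unfolding A_def by simp
    obtain D where D: "D < 0" and Dd: "((\<lambda>s. \<phi> (a + s *\<^sub>R a)) has_real_derivative D) (at 0 within {-1..0})"
      using boundary[OF nd] by blast
    have sub: "(\<lambda>u. (a + u *\<^sub>R a, \<beta> a)) ` {-1..0} \<subseteq> S"
      using line_in_A[OF nd] \<beta>I[OF aA] unfolding SA by auto
    have gd': "((\<lambda>u. t (a + u *\<^sub>R a, \<beta> a)) has_real_derivative 0) (at 0 within {-1..0})"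
      by (rule comp_zero_deriv[OF t_deriv sub cr tb\<beta>[OF aA]])
    have "0 \<le> D"
    proof (rule deriv_left_compare[OF Dd gd'])
      fix u :: real assume u: "u \<in> {-1..0}"
      have "\<phi> (a + u *\<^sub>R a) \<le> t (a + u *\<^sub>R a, \<beta> a)"
        by (rule \<phi>le[OF line_in_A[OF nd u] \<beta>I[OF aA]])
      moreover have "\<phi> (a + 0 *\<^sub>R a) = t (a + 0 *\<^sub>R a, \<beta> a)" using \<phi>eq[OF aA] by simp
      ultimately show "\<phi> (a + u *\<^sub>R a) - \<phi> (a + 0 *\<^sub>R a) \<le> t (a + u *\<^sub>R a, \<beta> a) - t (a + 0 *\<^sub>R a, \<beta> a)"
        by simp
    qed
    thus False using D by simp
  qed
  have uniq_a: "a = a0" if aA: "a \<in> A" and cr: "ta (a, \<beta> a) = 0" for a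
  proof (rule ccontr)
    assume ne: "a \<noteq> a0"
    have "\<phi> a0 < \<phi> a" by (rule seg_lemma[OF crit_int[OF aA cr] a0int ne cr])
    thus False using a0max[OF aA] by simp
  qed
  have uniq: "p = (a0, b0)" if pS: "p \<in> S" and z1: "ta p = 0" and z2: "tb p = 0" for p
  proof -
    obtain a b where p: "p = (a, b)" and aA: "a \<in> A" and bI: "b \<in> {-\<eta>..\<eta>}"
      using pS unfolding SA by auto
    have bb: "b = \<beta> a" using \<beta>eq[OF aA bI] z2 p by simp
    have "a = a0" using uniq_a[OF aA] z1 p bb by simp
    thus ?thesis using p bb b0_def by simp
  qed
  have SUP: "(SUP a'\<in>A. \<phi> a') = \<phi> a0"
    by (rule cSup_eq_maximum) (use a0A a0max in auto)
  show ?thesis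
  proof (intro exI[of _ a0] exI[of _ b0] conjI S0 ta0 tb0 ballI impI)
    fix p assume "p \<in> S" "ta p = 0 \<and> tb p = 0"
    thus "p = (a0, b0)" using uniq by blast
  next
    fix a b assume aA: "a \<in> A" and bI: "b \<in> {-\<eta>..\<eta>}"
    show "(\<phi> a = (SUP a'\<in>A. \<phi> a') \<and> t (a, b) = \<phi> a) \<longleftrightarrow> (a = a0 \<and> b = b0)"
    proof
      assume H: "\<phi> a = (SUP a'\<in>A. \<phi> a') \<and> t (a, b) = \<phi> a"
      have amax: "\<And>a'. a' \<in> A \<Longrightarrow> \<phi> a' \<le> \<phi> a" using H SUP a0max by simp
      have "ta (a, \<beta> a) = 0" by (rule max_crit[OF max_int[OF aA amax] amax])
      hence "a = a0" by (rule uniq_a[OF aA])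
      moreover have "b = \<beta> a" using t_eq_\<phi>[OF aA bI] H by simp
      ultimately show "a = a0 \<and> b = b0" using b0_def by simp
    next
      assume "a = a0 \<and> b = b0"
      thus "\<phi> a = (SUP a'\<in>A. \<phi> a') \<and> t (a, b) = \<phi> a"
        using SUP \<phi>eq[OF a0A] b0_def by simp
    qed
  qed
qed

end
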